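(* Let $c\ge 1$ and $d\ge 1$ be integers with $f=d/(2c)\le 1$, and set $\nu=\lfloor\sqrt{2/f}\rfloor$ if $\lfloor\sqrt{2/f}\rfloor\ge 2$, and $\nu=2$ otherwise. Then a single ring on the cycle $C_\nu$ with capacity $c$ on every edge can carry uniform traffic of $d$ units between every pair of its $\nu$ vertices; that is, there exist nonnegative integers $t^0_{jk},t^1_{jk}$ for $1\le j<k\le\nu$ with $t^0_{jk}+t^1_{jk}=d$, where $t^0_{jk}$ and $t^1_{jk}$ are routed on the two arcs of $C_\nu$ between $j$ and $k$, such that for every edge of $C_\nu$ the total traffic on arcs containing that edge is at most $c$.
   Context: $C_\nu$ denotes the cycle graph on vertices $1,\dots,\nu$ in cyclic order (edges $\{l,l+1\}$ for $1\le l<\nu$ and $\{\nu,1\}$; for $\nu=2$ it has two parallel edges, so that the two arcs between vertices $1$ and $2$ are distinct edges). *)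

theory Defs
  imports Complex_Main
begin

text \<open>Edge number l (1 \<le> l \<le> nu) joins l and l+1
  (edge nu joins nu and 1); for nu = 2 edges 1 and 2 are the two parallel edges.
  For vertices j < k, arc 0 is the path j, j+1, ..., k, using edges j, ..., k-1;
  arc 1 is the complementary path k, ..., nu, 1, ..., j using the remaining edges.\<close>

definition cycle_edges :: "nat \<Rightarrow> nat set" where
  "cycle_edges nu = {1..nu}"

definition arc_edges :: "nat \<Rightarrow> nat \<Rightarrow> nat \<Rightarrow> nat \<Rightarrow> nat set" where
  "arc_edges nu s j k = (if s = 0 then {j..<k} else cycle_edges nu - {j..<k})"

definition vertex_pairs :: "nat \<Rightarrow> (nat \<times> nat) set" where
  "vertex_pairs nu = {(j, k). 1 \<le> j \<and> j < k \<and> k \<le> nu}"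

definition edge_load :: "nat \<Rightarrow> (nat \<Rightarrow> nat \<Rightarrow> nat) \<Rightarrow> (nat \<Rightarrow> nat \<Rightarrow> nat) \<Rightarrow> nat \<Rightarrow> nat" where
  "edge_load nu t0 t1 l =
     (\<Sum>(j, k)\<in>vertex_pairs nu.
        (if l \<in> arc_edges nu 0 j k then t0 j k else 0) +
        (if l \<in> arc_edges nu 1 j k then t1 j k else 0))"

definition ring_size :: "nat \<Rightarrow> nat \<Rightarrow> nat" where
  "ring_size c d =
     (let f = real d / (2 * real c);
          m = \<lfloor>sqrt (2 / f)\<rfloor>
      in if m \<ge> 2 then nat m else 2)"

end

theory Submission
  imports Defs
begin

lemma card_pairs:
  assumes "1 \<le> l" "l \<le> n"
  shows "{(j,k). (j,k) \<in> vertex_pairs n \<and> l \<in> {j..<k}} = {1..l} \<times> {l+1..n}"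
  using assms unfolding vertex_pairs_def by auto

lemma load_all0:
  assumes "1 \<le> l" "l \<le> n"
  shows "edge_load n (\<lambda>_ _. d) (\<lambda>_ _. 0) l = d * (l * (n - l))"
proof -
  have fin: "finite (vertex_pairs n)"
    by (rule finite_subset[of _ "{..n} \<times> {..n}"]) (auto simp: vertex_pairs_def)
  have "edge_load n (\<lambda>_ _. d) (\<lambda>_ _. 0) l
      = (\<Sum>p\<in>vertex_pairs n. if l \<in> {fst p..<snd p} then d else 0)"
    unfolding edge_load_def arc_edges_def by (intro sum.cong) auto
  also have "\<dots> = (\<Sum>p\<in>{p\<in>vertex_pairs n. l \<in> {fst p..<snd p}}. d)"
    by (rule sum.inter_filter[OF fin, symmetric])
  also have "{p\<in>vertex_pairs n. l \<in> {fst p..<snd p}} = {1..l} \<times> {l+1..n}"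
    using assms unfolding vertex_pairs_def by auto
  finally show ?thesis by simp
qed

lemma prod_bound:
  fixes l n :: nat
  assumes "l \<le> n"
  shows "4 * (l * (n - l)) \<le> n^2"
proof -
  obtain r where r: "n = l + r" using assms le_Suc_ex by blast
  have "4 * (l * r) \<le> (l + r)^2"
  proof -
    have "(int l - int r)^2 \<ge> 0" by simp
    hence "4 * (int l * int r) \<le> (int l + int r)^2" by (simp add: power2_eq_square algebra_simps)
    thus ?thesis by (metis of_nat_add of_nat_le_iff of_nat_mult of_nat_numeral of_nat_power)
  qed
  thus ?thesis using r by simp
qed

theorem lemma1:
  fixes c d :: nat
  assumes "c \<ge> 1" and "d \<ge> 1" and "real d / (2 * real c) \<le> 1"
  shows "\<exists>t0 t1 :: nat \<Rightarrow> nat \<Rightarrow> nat.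
           (\<forall>(j, k)\<in>vertex_pairs (ring_size c d). t0 j k + t1 j k = d) \<and>
           (\<forall>l\<in>cycle_edges (ring_size c d). edge_load (ring_size c d) t0 t1 l \<le> c)"
proof -
  define m where "m = \<lfloor>sqrt (2 / (real d / (2 * real c)))\<rfloor>"
  have dc: "d \<le> 2 * c" using assms by (simp add: divide_simps)
  show ?thesis
  proof (cases "m \<ge> 2")
    case True
    define n where "n = nat m"
    have rs: "ring_size c d = n" unfolding ring_size_def n_def m_def[symmetric] Let_def
      using True m_def by simp
    have "real n \<le> sqrt (2 / (real d / (2 * real c)))"
      unfolding n_def m_def using True m_def by linarith
    hence "(real n)^2 \<le> (sqrt (2 / (real d / (2 * real c))))^2"
      by (intro power_mono) auto
    also have "\<dots> = 2 / (real d / (2 * real c))" by simp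
    also have "\<dots> = 4 * real c / real d" using assms by (simp add: field_simps)
    finally have "real d * (real n)^2 \<le> 4 * real c" using assms by (simp add: field_simps)
    hence dn: "d * n^2 \<le> 4 * c" by (metis of_nat_le_iff of_nat_mult of_nat_numeral of_nat_power)
    have A: "\<forall>l\<in>cycle_edges (ring_size c d). edge_load (ring_size c d) (\<lambda>_ _. d) (\<lambda>_ _. 0) l \<le> c"
    proof
      fix l assume "l \<in> cycle_edges (ring_size c d)"
      hence l: "1 \<le> l" "l \<le> n" using rs by (auto simp: cycle_edges_def)
      have "4 * (d * (l * (n - l))) \<le> d * n^2"
        using prod_bound[OF l(2)] by (metis mult.left_commute mult_le_mono2)
      hence "4 * (d * (l * (n - l))) \<le> 4 * c" using dn by linarith
      thus "edge_load (ring_size c d) (\<lambda>_ _. d) (\<lambda>_ _. 0) l \<le> c"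
        using load_all0[OF l] rs by simp
    qed
    show ?thesis using A by (intro exI[of _ "\<lambda>_ _. d"] exI[of _ "\<lambda>_ _. 0"] conjI) auto
  next
    case False
    have rs: "ring_size c d = 2" unfolding ring_size_def Let_def m_def[symmetric]
      using False by simp
    have vp: "vertex_pairs 2 = {(1,2)}" unfolding vertex_pairs_def by auto
    have B: "\<forall>l\<in>cycle_edges (ring_size c d). edge_load (ring_size c d) (\<lambda>_ _. d div 2) (\<lambda>_ _. d - d div 2) l \<le> c"
    proof
      fix l assume "l \<in> cycle_edges (ring_size c d)"
      hence "l = 1 \<or> l = 2" using rs by (auto simp: cycle_edges_def)
      thus "edge_load (ring_size c d) (\<lambda>_ _. d div 2) (\<lambda>_ _. d - d div 2) l \<le> c"
        using dc unfolding rs edge_load_def vp arc_edges_def cycle_edges_def by auto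
    qed
    show ?thesis using B
      by (intro exI[of _ "\<lambda>_ _. d div 2"] exI[of _ "\<lambda>_ _. d - d div 2"] conjI) (auto simp: rs vp)
  qed
qed

end
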